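(* Let $G:\{0,1\}^n\to\{0,1\}$ be a uniformly random function. Let $\mathcal A$ be an unbounded-time algorithm that makes $\mathrm{poly}(n)$ classical queries to $G$, and let $\{z_G\}_G$ be a family of $\mathrm{poly}(n)$-bit classical advice strings. Suppose $$\Pr_{G,\ x\leftarrow\{0,1\}^n}\big[\mathcal A^G(z_G,x)=G(x)\big]>\frac35.$$ Then for all sufficiently large $n$, for at least a $\frac1{30}$ fraction of $x\in\{0,1\}^n$, the probability (over uniform $G$ and the randomness of $\mathcal A$) that $x$ is contained in the list of queries made by $\mathcal A^G(z_G,x)$ is at least $\frac1{20}$.
   Context: Classical queries: the algorithm submits a classical input $y$ and receives $G(y)$. The advice $z_G$ may be an arbitrary function of $G$. *)

theory Defs
  imports Complex_Main "HOL-Library.FuncSet"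
begin

definition bits :: "nat \<Rightarrow> bool list set" where
  "bits n = {xs. length xs = n}"

definition funcs :: "nat \<Rightarrow> (bool list \<Rightarrow> bool) set" where
  "funcs n = bits n \<rightarrow>\<^sub>E (UNIV :: bool set)"

text \<open>A deterministic adaptive classical-query algorithm (decision tree):
  either output a bit, or submit a classical query y and continue depending
  on the answer G(y).\<close>
datatype qtree = Out bool | Qry "bool list" "bool \<Rightarrow> qtree"

primrec run :: "(bool list \<Rightarrow> bool) \<Rightarrow> qtree \<Rightarrow> bool" where
  "run G (Out b) = b"
| "run G (Qry y k) = run G (k (G y))"

primrec queries :: "(bool list \<Rightarrow> bool) \<Rightarrow> qtree \<Rightarrow> bool list list" where
  "queries G (Out b) = []"
| "queries G (Qry y k) = y # queries G (k (G y))"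

primrec depth :: "qtree \<Rightarrow> nat" where
  "depth (Out b) = 0"
| "depth (Qry y k) = Suc (max (depth (k True)) (depth (k False)))"

text \<open>Average of f over a finite set A (uniform probability / expectation).\<close>
definition avg :: "'a set \<Rightarrow> ('a \<Rightarrow> real) \<Rightarrow> real" where
  "avg A f = (\<Sum>a\<in>A. f a) / real (card A)"

definition poly_bounded :: "(nat \<Rightarrow> nat) \<Rightarrow> bool" where
  "poly_bounded p \<longleftrightarrow> (\<exists>c k. \<forall>n. p n \<le> c * (n + 1) ^ k)"

end

theory Submission imports Defs "HOL-Real_Asymp.Real_Asymp" begin

lemma length_queries_le: "length (queries G t) \<le> depth t"
proof (induction t)
  case (Out b) then show ?case by simp
next
  case (Qry y k)
  have "length (queries G (k (G y))) \<le> depth (k (G y))" using Qry by simp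
  moreover have "depth (k (G y)) \<le> max (depth (k True)) (depth (k False))"
    by (cases "G y") auto
  ultimately show ?case by simp
qed

lemma run_agree: "(\<forall>y\<in>set (queries G t). G' y = G y) \<Longrightarrow> run G' t = run G t"
proof (induction t)
  case (Out b) then show ?case by simp
next
  case (Qry y k)
  then have "G' y = G y" by simp
  with Qry show ?case by simp
qed

lemma card_bits: "card (bits n) = 2 ^ n"
  using card_lists_length_eq[of "UNIV::bool set" n] by (simp add: bits_def card_UNIV_bool)

lemma finite_bits: "finite (bits n)"
  using finite_lists_length_eq[of "UNIV::bool set" n] by (simp add: bits_def)

lemma card_funcs: "card (funcs n) = 2 ^ (2 ^ n)"
  unfolding funcs_def by (simp add: card_PiE finite_bits card_bits)

lemma finite_funcs: "finite (funcs n)"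
  unfolding funcs_def by (simp add: finite_PiE finite_bits)

lemma chernoff_sum:
  fixes lam :: real
  assumes "finite I" "R \<subseteq> I"
  shows "(\<Sum>G\<in>I \<rightarrow>\<^sub>E (UNIV::bool set). lam ^ card {x\<in>R. G x}) = 2 ^ (card I - card R) * (1 + lam) ^ card R"
proof -
  define f where "f = (\<lambda>x b. if x \<in> R \<and> b then lam else (1::real))"
  have eq1: "lam ^ card {x\<in>R. G x} = (\<Prod>x\<in>I. f x (G x))" for G
  proof -
    have "(\<Prod>x\<in>I. f x (G x)) = (\<Prod>x\<in>I \<inter> {x. x \<in> R \<and> G x}. lam) * (\<Prod>x\<in>I \<inter> - {x. x \<in> R \<and> G x}. 1)"
      unfolding f_def by (rule prod.If_cases) (rule assms(1))
    also have "I \<inter> {x. x \<in> R \<and> G x} = {x\<in>R. G x}" using assms(2) by auto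
    finally show ?thesis by simp
  qed
  have "(\<Sum>G\<in>I \<rightarrow>\<^sub>E (UNIV::bool set). lam ^ card {x\<in>R. G x}) = (\<Sum>G\<in>I \<rightarrow>\<^sub>E (UNIV::bool set). \<Prod>x\<in>I. f x (G x))"
    by (simp add: eq1)
  also have "\<dots> = (\<Prod>x\<in>I. \<Sum>b\<in>(UNIV::bool set). f x b)"
    by (rule prod_sum_PiE[symmetric]) (use assms in auto)
  also have "\<dots> = (\<Prod>x\<in>I. if x \<in> R then 1 + lam else 2)"
    by (rule prod.cong) (auto simp: f_def UNIV_bool)
  also have "\<dots> = (\<Prod>x\<in>I \<inter> {x. x \<in> R}. 1 + lam) * (\<Prod>x\<in>I \<inter> - {x. x \<in> R}. 2)"
    by (rule prod.If_cases) (rule assms(1))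
  also have "I \<inter> {x. x \<in> R} = R" using assms(2) by auto
  also have "I \<inter> - {x. x \<in> R} = I - R" by auto
  finally show ?thesis using assms by (simp add: card_Diff_subset finite_subset)
qed

definition cc :: real where "cc = (27/26)^100/(14/13)^51"

lemma card_supersets:
  assumes "finite A" "S \<subseteq> A" "card S \<le> k"
  shows "card {R. R \<subseteq> A \<and> card R = k \<and> S \<subseteq> R} = (card A - card S) choose (k - card S)"
proof -
  have fS: "finite S" using assms finite_subset by blast
  have "bij_betw (\<lambda>R. R - S) {R. R \<subseteq> A \<and> card R = k \<and> S \<subseteq> R} {T. T \<subseteq> A - S \<and> card T = k - card S}"
  proof (rule bij_betw_byWitness[where f' = "\<lambda>T. T \<union> S"])
    show "\<forall>a\<in>{R. R \<subseteq> A \<and> card R = k \<and> S \<subseteq> R}. a - S \<union> S = a" by auto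
    show "\<forall>a'\<in>{T. T \<subseteq> A - S \<and> card T = k - card S}. a' \<union> S - S = a'" by auto
    show "(\<lambda>R. R - S) ` {R. R \<subseteq> A \<and> card R = k \<and> S \<subseteq> R} \<subseteq> {T. T \<subseteq> A - S \<and> card T = k - card S}"
    proof
      fix T assume "T \<in> (\<lambda>R. R - S) ` {R. R \<subseteq> A \<and> card R = k \<and> S \<subseteq> R}"
      then obtain R where R: "R \<subseteq> A" "card R = k" "S \<subseteq> R" "T = R - S" by auto
      have "finite R" using R assms finite_subset by blast
      then show "T \<in> {T. T \<subseteq> A - S \<and> card T = k - card S}" using R by (auto simp: card_Diff_subset fS)
    qed
    show "(\<lambda>T. T \<union> S) ` {T. T \<subseteq> A - S \<and> card T = k - card S} \<subseteq> {R. R \<subseteq> A \<and> card R = k \<and> S \<subseteq> R}"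
    proof
      fix R assume "R \<in> (\<lambda>T. T \<union> S) ` {T. T \<subseteq> A - S \<and> card T = k - card S}"
      then obtain T where T: "T \<subseteq> A - S" "card T = k - card S" "R = T \<union> S" by auto
      have fT: "finite T" using T assms finite_subset by (metis finite_Diff)
      have "card R = card T + card S" using T fT fS by (simp add: card_Un_disjoint Int_commute Diff_disjoint) (metis Diff_disjoint Int_commute card_Un_disjoint disjoint_iff subset_iff)
      then show "R \<in> {R. R \<subseteq> A \<and> card R = k \<and> S \<subseteq> R}" using T assms by auto
    qed
  qed
  then have "card {R. R \<subseteq> A \<and> card R = k \<and> S \<subseteq> R} = card {T. T \<subseteq> A - S \<and> card T = k - card S}"
    by (rule bij_betw_same_card)
  also have "\<dots> = card (A - S) choose (k - card S)" using assms by (simp add: n_subsets)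
  also have "card (A - S) = card A - card S" using assms by (simp add: card_Diff_subset fS)
  finally show ?thesis .
qed

lemma card_filter_sum: "finite A \<Longrightarrow> real (card {x\<in>A. P x}) = (\<Sum>x\<in>A. if P x then 1 else 0)"
proof -
  assume "finite A"
  then have "(\<Sum>x\<in>A. of_bool (P x)) = real (card (A \<inter> {x. P x}))" by simp
  moreover have "A \<inter> {x. P x} = {x\<in>A. P x}" by auto
  ultimately show ?thesis by (simp add: of_bool_def)
qed

lemma tail_bound:
  fixes T :: "bool list \<Rightarrow> qtree" and R :: "bool list set"
  assumes R: "R \<subseteq> bits n" "card R = 100 * mm"
  shows "real (card {G \<in> funcs n. 51*mm \<le> card {x\<in>R. run (\<lambda>y. if y \<in> R then False else G y) (T x) = G x}})
     \<le> real (card (funcs n)) * cc^mm"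
proof -
  define b where "b = (\<lambda>G x. run (\<lambda>y. if y \<in> R then False else G y) (T x))"
  define phi where "phi = (\<lambda>G x. if x \<in> R then (G x = b G x) else G x)"
  define F where "F = funcs n"
  define lam :: real where "lam = 14/13"
  define s where "s = 51 * mm"
  have bphi: "b (phi G) = b G" for G
  proof -
    have "(\<lambda>y. if y \<in> R then False else phi G y) = (\<lambda>y. if y \<in> R then False else G y)"
      by (auto simp: phi_def)
    then show ?thesis unfolding b_def by simp
  qed
  have phi_app: "phi H x = (if x \<in> R then (H x = b H x) else H x)" for H x
    by (simp add: phi_def)
  have phiphi: "phi (phi G) = G" for G
  proof (rule ext)
    fix x show "phi (phi G) x = G x"
      using phi_app[of "phi G" x] phi_app[of G x] bphi[of G] by auto
  qed
  have phiF: "phi G \<in> F" if "G \<in> F" for G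
  proof -
    have "\<forall>x. x \<notin> bits n \<longrightarrow> G x = undefined" using that by (auto simp: F_def funcs_def PiE_iff extensional_def)
    then have "\<forall>x. x \<notin> bits n \<longrightarrow> phi G x = undefined" using R(1) by (auto simp: phi_def)
    then show ?thesis by (auto simp: F_def funcs_def PiE_iff extensional_def)
  qed
  have bij: "bij_betw phi F F"
    by (rule bij_betw_byWitness[where f'=phi]) (auto simp: phiphi phiF)
  have cnt: "card {x\<in>R. b G x = G x} = card {x\<in>R. phi G x}" for G
    by (rule arg_cong[where f=card]) (auto simp: phi_def)
  have lam1: "lam \<ge> 1" by (simp add: lam_def)
  have ind: "(if s \<le> c then 1 else 0) \<le> lam ^ c / lam ^ s" for c
  proof (cases "s \<le> c")
    case True
    then have "lam ^ s \<le> lam ^ c" using lam1 by (simp add: power_increasing)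
    moreover have "lam ^ s > 0" using lam1 by simp
    ultimately show ?thesis using True by simp
  next
    case False then show ?thesis using lam1 by simp
  qed
  have finF: "finite F" unfolding F_def by (rule finite_funcs)
  have "real (card {G \<in> F. s \<le> card {x\<in>R. b G x = G x}}) = (\<Sum>G\<in>F. if s \<le> card {x\<in>R. b G x = G x} then 1 else 0)"
    by (rule card_filter_sum[OF finF])
  also have "\<dots> \<le> (\<Sum>G\<in>F. lam ^ card {x\<in>R. b G x = G x} / lam ^ s)"
    by (rule sum_mono) (rule ind)
  also have "\<dots> = (\<Sum>G\<in>F. lam ^ card {x\<in>R. phi G x}) / lam ^ s"
    unfolding cnt by (rule sum_divide_distrib[symmetric])
  also have "(\<Sum>G\<in>F. lam ^ card {x\<in>R. phi G x}) = (\<Sum>G\<in>F. lam ^ card {x\<in>R. G x})"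
    using sum.reindex_bij_betw[OF bij, of "\<lambda>G. lam ^ card {x\<in>R. G x}"] by simp
  also have "\<dots> = 2 ^ (2^n - card R) * (1 + lam) ^ card R"
    unfolding F_def funcs_def by (rule chernoff_sum[OF finite_bits R(1), unfolded card_bits])
  finally have A: "real (card {G \<in> F. s \<le> card {x\<in>R. b G x = G x}}) \<le> 2 ^ (2^n - card R) * (1 + lam) ^ card R / lam ^ s" .
  have kle: "card R \<le> 2^n" using card_mono[OF finite_bits R(1)] by (simp add: card_bits)
  have e1: "(((1+lam)/2)^100/lam^51)^mm = (1+lam)^card R/(2^card R*lam^s)"
  proof -
    have "(((1+lam)/2)^100/lam^51)^mm = ((1+lam)/2)^(100*mm)/lam^(51*mm)" by (simp only: power_divide power_mult)
    also have "\<dots> = (1+lam)^card R/(2^card R*lam^s)" by (simp only: R(2) s_def power_divide divide_divide_eq_left)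
    finally show ?thesis .
  qed
  have e2: "(2::real) ^ (2^n) = 2 ^ (2^n - card R) * 2 ^ card R" using kle by (simp add: power_add[symmetric])
  have cc: "cc = ((1+lam)/2)^100/lam^51" by (simp add: cc_def lam_def)
  have B: "(2::real) ^ (2^n - card R) * (1 + lam) ^ card R / lam ^ s = real (card F) * cc ^ mm"
    unfolding cc e1 by (simp add: F_def card_funcs e2)
  show ?thesis using A B unfolding F_def b_def s_def by simp
qed

lemma member_ge_one:
  fixes f :: "'a \<Rightarrow> real"
  assumes "finite A" "y \<in> A" "\<And>z. f z \<ge> 0" "f y = 1"
  shows "(\<Sum>z\<in>A. f z) \<ge> 1"
  using member_le_sum[of y A f] assms by auto

lemma sum_geom2: "(\<Sum>i\<le>P. (2::nat)^i) < 2^(Suc P)"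
  by (induction P) auto

lemma card_adv: "card {xs. set xs \<subseteq> (UNIV::bool set) \<and> length xs \<le> P} \<le> 2^(Suc P)"
  using card_lists_length_le[of "UNIV::bool set" P] sum_geom2[of P] by (simp add: card_UNIV_bool)

lemma sum_subset_restrict:
  fixes f :: "'a \<Rightarrow> real"
  assumes "finite X" "R \<subseteq> X"
  shows "(\<Sum>x\<in>R. f x) = (\<Sum>x\<in>X. if x \<in> R then f x else 0)"
proof -
  have "(\<Sum>x\<in>X. if x \<in> R then f x else 0) = (\<Sum>x\<in>X \<inter> R. f x)"
    by (rule sum.inter_restrict[OF assms(1), symmetric])
  also have "X \<inter> R = R" using assms by auto
  finally show ?thesis by simp
qed

lemma binom_id1: "1 \<le> k \<Longrightarrow> 1 \<le> N \<Longrightarrow> N * ((N-1) choose (k-1)) = k * (N choose k)"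
  using binomial_absorption[of "k-1" N] by simp

lemma core:
  fixes T :: "bool list \<Rightarrow> bool list \<Rightarrow> qtree" and zz :: "(bool list \<Rightarrow> bool) \<Rightarrow> bool list"
    and Q P mm k n :: nat
  assumes dep: "\<And>a x. depth (T a x) \<le> Q"
    and adv: "\<And>G. G \<in> funcs n \<Longrightarrow> length (zz G) \<le> P"
    and kdef: "k = 100 * mm" and k2: "2 \<le> k" and kN: "k \<le> 2^n"
  shows "(\<Sum>G\<in>funcs n. \<Sum>x\<in>bits n. if run G (T (zz G) x) = G x \<and> x \<notin> set (queries G (T (zz G) x)) then 1 else 0 :: real)
     \<le> real (card (funcs n)) * 2^n * (51/100 + 2^(Suc P) * cc^mm + real Q * (real k - 1) / (2^n - 1))"
proof -
  define X where "X = bits n"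
  define F where "F = funcs n"
  define N where "N = (2::nat)^n"
  define K where "K = {R. R \<subseteq> X \<and> card R = k}"
  define Adv where "Adv = {xs. set xs \<subseteq> (UNIV::bool set) \<and> length xs \<le> P}"
  define c1 where "c1 = (N-1) choose (k-1)"
  define c2 where "c2 = (N-2) choose (k-2)"
  define u where "u = (\<lambda>G x. if run G (T (zz G) x) = G x \<and> x \<notin> set (queries G (T (zz G) x)) then 1 else 0 :: real)"
  define mask :: "bool list set \<Rightarrow> (bool list \<Rightarrow> bool) \<Rightarrow> bool list \<Rightarrow> bool"
    where "mask = (\<lambda>R G y. if y \<in> R then False else G y)"
  define C where "C = (\<lambda>R a G. card {x\<in>R. run (mask R G) (T a x) = G x})"
  define Qs where "Qs = (\<lambda>G x. set (queries G (T (zz G) x)) - {x})"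
  define B where "B = (\<lambda>R G. \<Sum>x\<in>R. \<Sum>y\<in>Qs G x. if y \<in> R then 1 else 0 :: real)"
  have finX: "finite X" unfolding X_def by (rule finite_bits)
  have finF: "finite F" unfolding F_def by (rule finite_funcs)
  have cardX: "card X = N" unfolding X_def N_def by (rule card_bits)
  have finK: "finite K" unfolding K_def using finX by (simp add: finite_subset)
  have finAdv: "finite Adv" unfolding Adv_def by (rule finite_lists_length_le) simp
  have finQs: "finite (Qs G x)" for G x unfolding Qs_def by simp
  have cardQs: "card (Qs G x) \<le> Q" for G x
  proof -
    have "card (Qs G x) \<le> card (set (queries G (T (zz G) x)))" unfolding Qs_def by (rule card_mono) auto
    also have "\<dots> \<le> length (queries G (T (zz G) x))" by (rule card_length)
    also have "\<dots> \<le> Q" using length_queries_le dep order_trans by blast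
    finally show ?thesis .
  qed
  have KR: "R \<subseteq> X" "finite R" "card R = k" if "R \<in> K" for R
    using that finX by (auto simp: K_def finite_subset)
  have step3: "(\<Sum>x\<in>R. u G x) \<le> real (C R (zz G) G) + B R G" if R: "R \<in> K" for R G
  proof -
    have "real (C R (zz G) G) = (\<Sum>x\<in>R. if run (mask R G) (T (zz G) x) = G x then 1 else 0)"
      unfolding C_def by (rule card_filter_sum) (rule KR(2)[OF R])
    moreover have "(\<Sum>x\<in>R. u G x) \<le> (\<Sum>x\<in>R. (if run (mask R G) (T (zz G) x) = G x then 1 else 0) + (\<Sum>y\<in>Qs G x. if y \<in> R then 1 else 0))"
    proof (rule sum_mono)
      fix x assume xR: "x \<in> R"
      have nn: "(\<Sum>y\<in>Qs G x. if y \<in> R then 1 else 0 :: real) \<ge> 0" by (rule sum_nonneg) simp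
      show "u G x \<le> (if run (mask R G) (T (zz G) x) = G x then 1 else 0) + (\<Sum>y\<in>Qs G x. if y \<in> R then 1 else 0)"
      proof (cases "run G (T (zz G) x) = G x \<and> x \<notin> set (queries G (T (zz G) x))")
        case False
        then have "u G x = 0" by (simp add: u_def)
        moreover have "(if run (mask R G) (T (zz G) x) = G x then 1 else 0 :: real) \<ge> 0" by simp
        ultimately show ?thesis using nn by linarith
      next
        case True
        show ?thesis
        proof (cases "\<exists>y\<in>Qs G x. y \<in> R")
          case True
          then obtain y where "y \<in> Qs G x" "y \<in> R" by blast
          then have "(\<Sum>y\<in>Qs G x. if y \<in> R then 1 else 0 :: real) \<ge> 1"
            by (intro member_ge_one[OF finQs]) auto
          then show ?thesis by (simp add: u_def)
        next
          case False
          have "\<forall>y\<in>set (queries G (T (zz G) x)). mask R G y = G y"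
            using False True unfolding Qs_def mask_def by auto
          then have "run (mask R G) (T (zz G) x) = run G (T (zz G) x)" by (rule run_agree)
          then show ?thesis using True nn by (simp add: u_def)
        qed
      qed
    qed
    ultimately show ?thesis unfolding B_def by (simp add: sum.distrib)
  qed
  have c1cnt: "(\<Sum>R\<in>K. if x \<in> R then 1 else 0 :: real) = real c1" if "x \<in> X" for x
  proof -
    have "(\<Sum>R\<in>K. if x \<in> R then 1 else 0 :: real) = real (card {R\<in>K. x \<in> R})"
      by (rule card_filter_sum[symmetric]) (rule finK)
    also have "{R\<in>K. x \<in> R} = {R. R \<subseteq> X \<and> card R = k \<and> {x} \<subseteq> R}" by (auto simp: K_def)
    also have "card \<dots> = c1" using card_supersets[OF finX, of "{x}" k] that k2 by (simp add: c1_def cardX)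
    finally show ?thesis .
  qed
  have step4: "(\<Sum>R\<in>K. \<Sum>x\<in>R. f x) = real c1 * (\<Sum>x\<in>X. f x)" for f :: "bool list \<Rightarrow> real"
  proof -
    have "(\<Sum>R\<in>K. \<Sum>x\<in>R. f x) = (\<Sum>R\<in>K. \<Sum>x\<in>X. if x \<in> R then f x else 0)"
      by (rule sum.cong) (auto intro: sum_subset_restrict[OF finX] dest: KR)
    also have "\<dots> = (\<Sum>x\<in>X. \<Sum>R\<in>K. if x \<in> R then f x else 0)" by (rule sum.swap)
    also have "\<dots> = (\<Sum>x\<in>X. f x * (\<Sum>R\<in>K. if x \<in> R then 1 else 0))"
      by (rule sum.cong) (auto simp: sum_distrib_left intro!: sum.cong)
    also have "\<dots> = (\<Sum>x\<in>X. f x * real c1)" by (rule sum.cong) (auto simp: c1cnt)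
    also have "\<dots> = real c1 * (\<Sum>x\<in>X. f x)" by (simp add: sum_distrib_left mult.commute)
    finally show ?thesis .
  qed
  have c2cnt: "(\<Sum>R\<in>K. if x \<in> R \<and> y \<in> R then 1 else 0 :: real) \<le> real c2" if "x \<in> X" "y \<noteq> x" for x y
  proof -
    have "(\<Sum>R\<in>K. if x \<in> R \<and> y \<in> R then 1 else 0 :: real) = real (card {R\<in>K. x \<in> R \<and> y \<in> R})"
      by (rule card_filter_sum[symmetric]) (rule finK)
    also have "\<dots> \<le> real c2"
    proof (cases "y \<in> X")
      case True
      have "{R\<in>K. x \<in> R \<and> y \<in> R} = {R. R \<subseteq> X \<and> card R = k \<and> {x,y} \<subseteq> R}" by (auto simp: K_def)
      moreover have "card {x,y} = 2" using that by simp
      ultimately have "card {R\<in>K. x \<in> R \<and> y \<in> R} = c2"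
        using card_supersets[OF finX, of "{x,y}" k] that True k2 by (simp add: c2_def cardX numeral_2_eq_2)
      then show ?thesis by simp
    next
      case False
      then have "{R\<in>K. x \<in> R \<and> y \<in> R} = {}" by (auto simp: K_def)
      then show ?thesis by (simp only: card.empty)
    qed
    finally show ?thesis .
  qed
  have step5: "(\<Sum>R\<in>K. B R G) \<le> real N * real Q * real c2" for G
  proof -
    have "(\<Sum>R\<in>K. B R G) = (\<Sum>R\<in>K. \<Sum>x\<in>X. \<Sum>y\<in>Qs G x. if x \<in> R \<and> y \<in> R then 1 else 0 :: real)"
    proof (rule sum.cong[OF refl])
      fix R assume R: "R \<in> K"
      have "B R G = (\<Sum>x\<in>X. if x \<in> R then (\<Sum>y\<in>Qs G x. if y \<in> R then 1 else 0 :: real) else 0)"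
        unfolding B_def by (rule sum_subset_restrict[OF finX KR(1)[OF R]])
      also have "\<dots> = (\<Sum>x\<in>X. \<Sum>y\<in>Qs G x. if x \<in> R \<and> y \<in> R then 1 else 0 :: real)"
        by (rule sum.cong) auto
      finally show "B R G = \<dots>" .
    qed
    also have "\<dots> = (\<Sum>x\<in>X. \<Sum>R\<in>K. \<Sum>y\<in>Qs G x. if x \<in> R \<and> y \<in> R then 1 else 0 :: real)" by (rule sum.swap)
    also have "\<dots> = (\<Sum>x\<in>X. \<Sum>y\<in>Qs G x. \<Sum>R\<in>K. if x \<in> R \<and> y \<in> R then 1 else 0 :: real)"
      by (rule sum.cong[OF refl]) (rule sum.swap)
    also have "\<dots> \<le> (\<Sum>x\<in>X. \<Sum>y\<in>Qs G x. real c2)"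
      by (intro sum_mono c2cnt) (auto simp: Qs_def)
    also have "\<dots> \<le> (\<Sum>x\<in>X. real Q * real c2)"
      by (intro sum_mono) (simp add: cardQs mult_right_mono)
    also have "\<dots> = real N * real Q * real c2" by (simp add: cardX)
    finally show ?thesis .
  qed
  have tail: "real (card {G\<in>F. 51*mm \<le> C R a G}) \<le> real (card F) * cc^mm" if R: "R \<in> K" for R a
    using tail_bound[of R n mm "T a"] KR[OF R] kdef unfolding C_def mask_def F_def X_def by simp
  have step6: "(\<Sum>G\<in>F. real (C R (zz G) G)) \<le> real (card F) * (51*mm) + real k * real (card Adv) * (real (card F) * cc^mm)"
    if R: "R \<in> K" for R
  proof -
    have pw: "real (C R (zz G) G) \<le> 51*mm + real k * (\<Sum>a\<in>Adv. if 51*mm \<le> C R a G then 1 else 0)" if G: "G \<in> F" for G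
    proof (cases "51*mm \<le> C R (zz G) G")
      case True
      have "zz G \<in> Adv" using adv G by (simp add: Adv_def F_def)
      then have s1: "(\<Sum>a\<in>Adv. if 51*mm \<le> C R a G then 1 else 0 :: real) \<ge> 1"
        by (intro member_ge_one[OF finAdv]) (auto simp: True)
      have "C R (zz G) G \<le> k" unfolding C_def using KR[OF R] by (metis (no_types, lifting) card_mono mem_Collect_eq subsetI)
      then have ck: "real (C R (zz G) G) \<le> real k" by simp
      have "real k * 1 \<le> real k * (\<Sum>a\<in>Adv. if 51*mm \<le> C R a G then 1 else 0 :: real)"
        by (rule mult_left_mono[OF s1]) simp
      then show ?thesis using ck by simp
    next
      case False
      have "(\<Sum>a\<in>Adv. if 51*mm \<le> C R a G then 1 else 0 :: real) \<ge> 0" by (rule sum_nonneg) simp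
      then have "real k * (\<Sum>a\<in>Adv. if 51*mm \<le> C R a G then 1 else 0 :: real) \<ge> 0" by simp
      moreover have "real (C R (zz G) G) \<le> 51*mm" using False by simp
      ultimately show ?thesis by linarith
    qed
    have advs: "(\<Sum>a\<in>Adv. \<Sum>G\<in>F. if 51*mm \<le> C R a G then 1 else 0 :: real) \<le> real (card Adv) * (real (card F) * cc^mm)"
    proof -
      have "(\<Sum>a\<in>Adv. \<Sum>G\<in>F. if 51*mm \<le> C R a G then 1 else 0 :: real) = (\<Sum>a\<in>Adv. real (card {G\<in>F. 51*mm \<le> C R a G}))"
        by (rule sum.cong[OF refl]) (rule card_filter_sum[symmetric, OF finF])
      also have "\<dots> \<le> (\<Sum>a\<in>Adv. real (card F) * cc^mm)"
        by (rule sum_mono) (rule tail[OF R])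
      also have "\<dots> = real (card Adv) * (real (card F) * cc^mm)" by simp
      finally show ?thesis .
    qed
    have "(\<Sum>G\<in>F. real (C R (zz G) G)) \<le> (\<Sum>G\<in>F. 51*mm + real k * (\<Sum>a\<in>Adv. if 51*mm \<le> C R a G then 1 else 0))"
      by (rule sum_mono) (rule pw)
    also have "\<dots> = (\<Sum>G\<in>F. real (51*mm)) + real k * (\<Sum>G\<in>F. \<Sum>a\<in>Adv. if 51*mm \<le> C R a G then 1 else 0)"
      by (simp only: sum.distrib sum_distrib_left)
    also have "(\<Sum>G\<in>F. \<Sum>a\<in>Adv. if 51*mm \<le> C R a G then 1 else 0 :: real) = (\<Sum>a\<in>Adv. \<Sum>G\<in>F. if 51*mm \<le> C R a G then 1 else 0)"
      by (rule sum.swap)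
    also have "(\<Sum>G\<in>F. real (51*mm)) = real (card F) * (51*mm)" by simp
    also have "real (card F) * (51*mm) + real k * (\<Sum>a\<in>Adv. \<Sum>G\<in>F. if 51*mm \<le> C R a G then 1 else 0 :: real)
       \<le> real (card F) * (51*mm) + real k * (real (card Adv) * (real (card F) * cc^mm))"
      using mult_left_mono[OF advs, of "real k"] by simp
    finally show ?thesis by (simp add: mult.assoc)
  qed
  define S where "S = (\<Sum>G\<in>F. \<Sum>x\<in>X. u G x)"
  have "real c1 * S = (\<Sum>G\<in>F. \<Sum>R\<in>K. \<Sum>x\<in>R. u G x)"
    unfolding S_def by (simp add: step4 sum_distrib_left)
  also have "\<dots> \<le> (\<Sum>G\<in>F. \<Sum>R\<in>K. real (C R (zz G) G) + B R G)"
    by (intro sum_mono step3)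
  also have "\<dots> = (\<Sum>R\<in>K. \<Sum>G\<in>F. real (C R (zz G) G)) + (\<Sum>G\<in>F. \<Sum>R\<in>K. B R G)"
    using sum.swap[of "\<lambda>G R. real (C R (zz G) G)" K F] by (simp only: sum.distrib)
  also have "\<dots> \<le> (\<Sum>R\<in>K. real (card F) * (51*mm) + real k * real (card Adv) * (real (card F) * cc^mm))
                 + (\<Sum>G\<in>F. real N * real Q * real c2)"
    by (intro add_mono sum_mono step6 step5)
  finally have main: "real c1 * S \<le> real (card K) * (real (card F) * (51*mm) + real k * real (card Adv) * (real (card F) * cc^mm))
                 + real (card F) * (real N * real Q * real c2)" by simp
  have cardK: "card K = N choose k" unfolding K_def using finX by (simp add: n_subsets cardX)
  have N1: "1 \<le> N" "2 \<le> N" using k2 kN by (auto simp: N_def)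
  have hK: "N * c1 = k * card K" unfolding c1_def cardK by (rule binom_id1) (use k2 N1 in auto)
  have h2n: "(N-1) * c2 = (k-1) * c1"
  proof -
    have "(N-1) * ((N-1-1) choose (k-1-1)) = (k-1) * ((N-1) choose (k-1))"
      by (rule binom_id1) (use k2 N1 in auto)
    then show ?thesis by (simp add: c1_def c2_def numeral_2_eq_2 diff_diff_add)
  qed
  have c1pos: "c1 > 0" unfolding c1_def using kN k2 by (simp add: N_def)
  have mmpos: "real mm > 0" using k2 kdef by simp
  have Kc_eq: "real (card K) = real N * real c1 / real k"
    using hK k2 by (simp add: field_simps of_nat_mult[symmetric] del: of_nat_mult)
  have c2_eq: "real c2 = real c1 * (real k - 1) / (real N - 1)"
  proof -
    have "real (N-1) * real c2 = real (k-1) * real c1" using h2n by (metis of_nat_mult)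
    moreover have "real (N-1) = real N - 1" "real (k-1) = real k - 1" using N1 k2 by auto
    moreover have "real N - 1 > 0" using N1 by simp
    ultimately show ?thesis by (simp add: field_simps)
  qed
  define M where "M = real (card Adv)"
  have Mle: "M \<le> 2^(Suc P)" unfolding M_def Adv_def using card_adv[of P] by (metis numeral_power_le_of_nat_cancel_iff of_nat_le_iff of_nat_numeral of_nat_power)
  have ccnn: "cc \<ge> 0" by (simp add: cc_def)
  have N1r: "real N - 1 > 0" using N1 by simp
  define Y where "Y = real (card F) * real N * (51/100 + M * cc^mm + real Q * (real k - 1) / (real N - 1))"
  have E: "real (card K) * (real (card F) * (51*mm) + real k * real (card Adv) * (real (card F) * cc^mm))
                 + real (card F) * (real N * real Q * real c2) = real c1 * Y"
    unfolding Kc_eq c2_eq Y_def M_def kdef using mmpos N1r by (simp add: field_simps)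
  have "real c1 * S \<le> real c1 * Y" using main E by simp
  then have SY: "S \<le> Y" using c1pos by simp
  have "Y \<le> real (card F) * real N * (51/100 + 2^(Suc P) * cc^mm + real Q * (real k - 1) / (real N - 1))"
    unfolding Y_def by (intro mult_left_mono add_mono mult_right_mono Mle) (auto simp: ccnn)
  then have "S \<le> real (card F) * real N * (51/100 + 2^(Suc P) * cc^mm + real Q * (real k - 1) / (real N - 1))"
    using SY by linarith
  then show ?thesis unfolding S_def u_def F_def X_def N_def by simp
qed

lemma poly_exp_eventually:
  assumes "poly_bounded q" "poly_bounded p"
  shows "\<exists>N0. \<forall>n\<ge>N0. 4000000 * (q n + 1) * (p n + 12) \<le> (2::nat)^n"
proof -
  obtain c a where q: "\<And>n. q n \<le> c*(n+1)^a" using assms(1) unfolding poly_bounded_def by blast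
  obtain d b where p: "\<And>n. p n \<le> d*(n+1)^b" using assms(2) unfolding poly_bounded_def by blast
  define E :: real where "E = 4000000*(real c+1)*(real d+12)"
  have "filterlim (\<lambda>n::nat. 2^n/(real n+1)^(a+b)) at_top at_top" by real_asymp
  then have "eventually (\<lambda>n. E \<le> 2^n/(real n+1)^(a+b)) sequentially" by (simp add: filterlim_at_top)
  then obtain N0 where N0: "\<And>n. n \<ge> N0 \<Longrightarrow> E \<le> 2^n/(real n+1)^(a+b)" by (auto simp: eventually_sequentially)
  have "4000000 * (q n + 1) * (p n + 12) \<le> (2::nat)^n" if "n \<ge> N0" for n
  proof -
    have pos: "(real n+1)^(a+b) > 0" by simp
    have ge1a: "(real n+1)^a \<ge> 1" "(real n+1)^b \<ge> 1" by simp_all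
    have "real (q n) \<le> real (c*(n+1)^a)" using q[of n] by (simp only: of_nat_le_iff)
    also have "real (c*(n+1)^a) = real c*(real n+1)^a" by (simp add: add.commute)
    finally have "real (q n) \<le> real c*(real n+1)^a" .
    then have qa: "real (q n) + 1 \<le> (real c+1)*(real n+1)^a" using ge1a(1) by (simp only: distrib_right mult_1_left)
    have "real (p n) \<le> real (d*(n+1)^b)" using p[of n] by (simp only: of_nat_le_iff)
    also have "real (d*(n+1)^b) = real d*(real n+1)^b" by (simp add: add.commute)
    finally have "real (p n) \<le> real d*(real n+1)^b" .
    then have pb: "real (p n) + 12 \<le> (real d+12)*(real n+1)^b" using ge1a(2) by (simp only: distrib_right)
    have "4000000 * (real (q n) + 1) * (real (p n) + 12) \<le> 4000000 * ((real c+1)*(real n+1)^a) * ((real d+12)*(real n+1)^b)"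
      using qa pb by (intro mult_mono mult_left_mono) auto
    also have "\<dots> = E * (real n+1)^(a+b)" by (simp add: E_def power_add algebra_simps)
    also have "\<dots> \<le> 2^n" using N0[OF that] pos by (simp add: pos_le_divide_eq)
    finally have "real (4000000 * (q n + 1) * (p n + 12)) \<le> real ((2::nat)^n)" by (simp add: add.commute)
    then show ?thesis by (simp only: of_nat_le_iff)
  qed
  then show ?thesis by blast
qed

lemma cc_le: "cc \<le> 199/200"
  unfolding cc_def by (simp add: power_divide)

lemma half_le: "(199/200::real)^200 \<le> 1/2"
  by (simp add: power_divide)

lemma params:
  fixes Q P n :: nat
  assumes hN: "4000000*(Q+1)*(P+12) \<le> (2::nat)^n"
  defines "j \<equiv> 2^n div (4000000*(Q+1))"
  shows "2 \<le> 100*(200*j)" "100*(200*j) \<le> (2::nat)^n"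
    "51/100 + 2^(Suc P) * cc^(200*j) + real Q * (real (100*(200*j)) - 1) / (2^n - 1) \<le> 31/60"
proof -
  have qpos: "(4000000*(Q+1)::nat) > 0" by simp
  have h': "(P+12)*(4000000*(Q+1)) \<le> 2^n" using hN by (simp add: algebra_simps)
  have jP: "P+12 \<le> j" unfolding j_def using less_eq_div_iff_mult_less_eq[OF qpos] h' by blast
  have jm: "j*(4000000*(Q+1)) \<le> 2^n" unfolding j_def using less_eq_div_iff_mult_less_eq[OF qpos, of "2^n div (4000000*(Q+1))" "2^n"] by simp
  show k2: "2 \<le> 100*(200*j)" using jP by simp
  have "100*(200*j) \<le> j*(4000000*(Q+1))" by simp
  then show kN: "100*(200*j) \<le> (2::nat)^n" using jm by linarith
  define k where "k = 100*(200*j)"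
  have ccnn: "cc \<ge> 0" by (simp add: cc_def)
  have "cc^(200*j) \<le> (199/200)^(200*j)" by (rule power_mono[OF cc_le ccnn])
  also have "\<dots> = ((199/200)^200)^j" by (simp add: power_mult)
  also have "\<dots> \<le> (1/2)^j" by (rule power_mono[OF half_le]) simp
  also have "\<dots> \<le> (1/2)^(P+12)" by (rule power_decreasing[OF jP]) simp_all
  finally have c1: "cc^(200*j) \<le> (1/2)^(P+12)" .
  have e11: "(2::real)^(Suc P) * (1/2)^(P+12) = 1/2048"
  proof -
    have "(2::real)^(P+12) = 2^(Suc P) * 2^11" by (simp add: power_add)
    then show ?thesis by (simp add: power_one_over)
  qed
  have "(2::real)^(Suc P) * cc^(200*j) \<le> 2^(Suc P) * (1/2)^(P+12)"
    by (rule mult_left_mono[OF c1]) simp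
  then have t1: "2^(Suc P) * cc^(200*j) \<le> 1/2048" using e11 by linarith
  have "200*Q*k \<le> j*(4000000*(Q+1))" unfolding k_def by simp
  then have "200*Q*k \<le> 2^n" using jm by linarith
  then have nat2: "200*Q*(k-1) \<le> 2^n - 1"
    by (cases "Q = 0") (auto simp: diff_mult_distrib2 intro: le_diff_conv2[THEN iffD2])
  have "real (200*Q*(k-1)) \<le> real (2^n - 1)" using nat2 by (simp only: of_nat_le_iff)
  moreover have "real (k-1) = real k - 1" "real (2^n - 1::nat) = 2^n - 1" using k2 by (auto simp: k_def)
  ultimately have "200 * real Q * (real k - 1) \<le> 2^n - 1" by simp
  moreover have "(2::real)^n - 1 > 0"
  proof -
    have "2 \<le> (2::nat)^n" using k2 kN by linarith
    then have "real (2::nat) \<le> real ((2::nat)^n)" by (simp only: of_nat_le_iff)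
    then show ?thesis by simp
  qed
  ultimately have t2: "real Q * (real k - 1) / (2^n - 1) \<le> 1/200" by (simp add: divide_simps)
  show "51/100 + 2^(Suc P) * cc^(200*j) + real Q * (real (100*(200*j)) - 1) / (2^n - 1) \<le> 31/60"
    using t1 t2 unfolding k_def by linarith
qed

lemma avg3: "avg A (\<lambda>a. avg B (\<lambda>b. avg C (\<lambda>c. f a b c))) =
   (\<Sum>a\<in>A. \<Sum>b\<in>B. \<Sum>c\<in>C. f a b c) / (real (card A) * real (card B) * real (card C))"
  unfolding avg_def by (simp add: sum_divide_distrib[symmetric] divide_divide_eq_left mult.commute mult.left_commute)

lemma avg2: "avg A (\<lambda>a. avg C (\<lambda>c. f a c)) =
   (\<Sum>a\<in>A. \<Sum>c\<in>C. f a c) / (real (card A) * real (card C))"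
  unfolding avg_def by (simp add: sum_divide_distrib[symmetric] divide_divide_eq_left mult.commute)

lemma final_n:
  fixes A :: "nat \<Rightarrow> bool list \<Rightarrow> bool list \<Rightarrow> bool list \<Rightarrow> qtree"
    and z :: "nat \<Rightarrow> (bool list \<Rightarrow> bool) \<Rightarrow> bool list"
    and q p m :: "nat \<Rightarrow> nat" and n :: nat
  assumes queries_bound: "\<And>a x r. depth (A n a x r) \<le> q n"
    and advice_len: "\<And>G. G \<in> funcs n \<Longrightarrow> length (z n G) \<le> p n"
    and success: "avg (funcs n) (\<lambda>G. avg (bits n) (\<lambda>x. avg (bits (m n))
                     (\<lambda>r. if run G (A n (z n G) x r) = G x then 1 else 0))) > 3 / 5"
    and hN: "4000000 * (q n + 1) * (p n + 12) \<le> (2::nat)^n"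
  shows "real (card {x \<in> bits n. avg (funcs n) (\<lambda>G. avg (bits (m n))
                  (\<lambda>r. if x \<in> set (queries G (A n (z n G) x r)) then 1 else 0)) \<ge> 1 / 20})
           \<ge> real (card (bits n)) / 30"
proof (rule ccontr)
  define F where "F = funcs n"
  define X where "X = bits n"
  define Rr where "Rr = bits (m n)"
  define j where "j = 2^n div (4000000*(q n+1))"
  define mm where "mm = 200*j"
  define k where "k = 100*mm"
  define bd where "bd = 51/100 + 2^(Suc (p n)) * cc^mm + real (q n) * (real k - 1) / (2^n - 1)"
  define cor where "cor = (\<lambda>G x r. if run G (A n (z n G) x r) = G x then 1 else 0 :: real)"
  define qi where "qi = (\<lambda>G x r. if x \<in> set (queries G (A n (z n G) x r)) then 1 else 0 :: real)"
  define uu where "uu = (\<lambda>G x r. if run G (A n (z n G) x r) = G x \<and> x \<notin> set (queries G (A n (z n G) x r)) then 1 else 0 :: real)"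
  define Bs where "Bs = {x \<in> X. avg F (\<lambda>G. avg Rr (\<lambda>r. qi G x r)) \<ge> 1 / 20}"
  assume neg: "\<not> real (card {x \<in> bits n. avg (funcs n) (\<lambda>G. avg (bits (m n))
                  (\<lambda>r. if x \<in> set (queries G (A n (z n G) x r)) then 1 else 0)) \<ge> 1 / 20})
           \<ge> real (card (bits n)) / 30"
  have Bsl: "real (card Bs) < 2^n / 30" using neg unfolding Bs_def X_def F_def Rr_def qi_def by (simp add: card_bits)
  have par: "2 \<le> k" "k \<le> 2^n" "bd \<le> 31/60"
    using params[OF hN] unfolding bd_def k_def mm_def j_def by auto
  have finF: "finite F" "finite X" "finite Rr" unfolding F_def X_def Rr_def by (simp_all add: finite_funcs finite_bits)
  have cF: "real (card F) > 0" "real (card X) = 2^n" "real (card Rr) > 0"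
    unfolding F_def X_def Rr_def by (simp_all add: card_funcs card_bits)
  define W where "W = real (card F) * 2^n * real (card Rr)"
  have Wpos: "W > 0" using cF unfolding W_def by simp
  have succ: "(\<Sum>G\<in>F. \<Sum>x\<in>X. \<Sum>r\<in>Rr. cor G x r) > 3/5 * W"
  proof -
    have "avg F (\<lambda>G. avg X (\<lambda>x. avg Rr (\<lambda>r. cor G x r))) > 3/5"
      using success unfolding F_def X_def Rr_def cor_def .
    then have "(\<Sum>G\<in>F. \<Sum>x\<in>X. \<Sum>r\<in>Rr. cor G x r) / W > 3/5"
      unfolding avg3 W_def using cF by simp
    then show ?thesis using Wpos by (simp add: pos_less_divide_eq mult.commute)
  qed
  have pw: "cor G x r \<le> uu G x r + qi G x r" for G x r
    unfolding cor_def uu_def qi_def by auto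
  have s1: "(\<Sum>G\<in>F. \<Sum>x\<in>X. \<Sum>r\<in>Rr. cor G x r) \<le> (\<Sum>G\<in>F. \<Sum>x\<in>X. \<Sum>r\<in>Rr. uu G x r) + (\<Sum>G\<in>F. \<Sum>x\<in>X. \<Sum>r\<in>Rr. qi G x r)"
  proof -
    have "(\<Sum>G\<in>F. \<Sum>x\<in>X. \<Sum>r\<in>Rr. cor G x r) \<le> (\<Sum>G\<in>F. \<Sum>x\<in>X. \<Sum>r\<in>Rr. uu G x r + qi G x r)"
      by (intro sum_mono pw)
    then show ?thesis by (simp only: sum.distrib)
  qed
  have s2: "(\<Sum>G\<in>F. \<Sum>x\<in>X. \<Sum>r\<in>Rr. uu G x r) \<le> W * bd"
  proof -
    have "(\<Sum>G\<in>F. \<Sum>x\<in>X. \<Sum>r\<in>Rr. uu G x r) = (\<Sum>G\<in>F. \<Sum>r\<in>Rr. \<Sum>x\<in>X. uu G x r)"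
      by (rule sum.cong[OF refl]) (rule sum.swap)
    also have "\<dots> = (\<Sum>r\<in>Rr. \<Sum>G\<in>F. \<Sum>x\<in>X. uu G x r)" by (rule sum.swap)
    also have "\<dots> \<le> (\<Sum>r\<in>Rr. real (card F) * 2^n * bd)"
    proof (rule sum_mono)
      fix r
      show "(\<Sum>G\<in>F. \<Sum>x\<in>X. uu G x r) \<le> real (card F) * 2^n * bd"
        using core[where T="\<lambda>a x. A n a x r" and zz="z n" and Q="q n" and P="p n" and mm=mm and k=k and n=n] queries_bound advice_len par
        unfolding F_def X_def uu_def bd_def k_def by simp
    qed
    also have "\<dots> = W * bd" unfolding W_def by simp
    finally show ?thesis .
  qed
  have s3: "(\<Sum>G\<in>F. \<Sum>x\<in>X. \<Sum>r\<in>Rr. qi G x r) \<le> real (card F) * real (card Rr) * (real (card Bs) + 2^n / 20)"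
  proof -
    have "(\<Sum>G\<in>F. \<Sum>x\<in>X. \<Sum>r\<in>Rr. qi G x r) = (\<Sum>x\<in>X. \<Sum>G\<in>F. \<Sum>r\<in>Rr. qi G x r)" by (rule sum.swap)
    also have "\<dots> \<le> (\<Sum>x\<in>X. real (card F) * real (card Rr) * ((if x \<in> Bs then 1 else 0) + 1/20))"
    proof (rule sum_mono)
      fix x assume xX: "x \<in> X"
      have h: "(\<Sum>G\<in>F. \<Sum>r\<in>Rr. qi G x r) = real (card F) * real (card Rr) * avg F (\<lambda>G. avg Rr (\<lambda>r. qi G x r))"
        unfolding avg2 using cF by simp
      have nn: "avg F (\<lambda>G. avg Rr (\<lambda>r. qi G x r)) \<ge> 0"
        unfolding avg2 using cF by (intro divide_nonneg_pos sum_nonneg) (auto simp: qi_def)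
      have le1: "(\<Sum>G\<in>F. \<Sum>r\<in>Rr. qi G x r) \<le> real (card F) * real (card Rr)"
      proof -
        have "(\<Sum>G\<in>F. \<Sum>r\<in>Rr. qi G x r) \<le> (\<Sum>G\<in>F. \<Sum>r\<in>Rr. 1)" by (intro sum_mono) (simp add: qi_def)
        then show ?thesis by simp
      qed
      show "(\<Sum>G\<in>F. \<Sum>r\<in>Rr. qi G x r) \<le> real (card F) * real (card Rr) * ((if x \<in> Bs then 1 else 0) + 1/20)"
      proof (cases "x \<in> Bs")
        case True
        have e: "real (card F) * real (card Rr) * ((if x \<in> Bs then 1 else 0) + 1/20) = real (card F) * real (card Rr) + real (card F) * real (card Rr) / 20"
          using True by (simp add: algebra_simps)
        have "real (card F) * real (card Rr) \<ge> 0" by simp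
        then show ?thesis using le1 e by linarith
      next
        case False
        then have "avg F (\<lambda>G. avg Rr (\<lambda>r. qi G x r)) < 1/20" using xX unfolding Bs_def by simp
        then have "real (card F) * real (card Rr) * avg F (\<lambda>G. avg Rr (\<lambda>r. qi G x r)) \<le> real (card F) * real (card Rr) * (1/20)"
          using cF by (intro mult_left_mono) auto
        then show ?thesis using False h by simp
      qed
    qed
    also have "\<dots> = real (card F) * real (card Rr) * (\<Sum>x\<in>X. (if x \<in> Bs then 1 else 0) + 1/20)"
      by (simp add: sum_distrib_left)
    also have "(\<Sum>x\<in>X. (if x \<in> Bs then 1 else 0) + 1/20 :: real) = real (card Bs) + 2^n/20"
    proof -
      have "(\<Sum>x\<in>X. (if x \<in> Bs then 1 else 0 :: real)) = real (card {x\<in>X. x \<in> Bs})"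
        by (rule card_filter_sum[symmetric]) (rule finF(2))
      moreover have "{x\<in>X. x \<in> Bs} = Bs" unfolding Bs_def by auto
      ultimately show ?thesis using cF by (simp add: sum.distrib)
    qed
    finally show ?thesis .
  qed
  have "3/5 * W < W * bd + real (card F) * real (card Rr) * (real (card Bs) + 2^n / 20)"
    using succ s1 s2 s3 by linarith
  also have "\<dots> < W * bd + real (card F) * real (card Rr) * (2^n/30 + 2^n / 20)"
    using Bsl cF by (intro add_strict_left_mono mult_strict_left_mono) auto
  also have "\<dots> = W * (bd + 1/12)" unfolding W_def by (simp add: algebra_simps)
  also have "\<dots> \<le> W * (3/5)" using par(3) Wpos by (intro mult_left_mono) auto
  finally show False by simp
qed

theorem lemma4p2:
  fixes A :: "nat \<Rightarrow> bool list \<Rightarrow> bool list \<Rightarrow> bool list \<Rightarrow> qtree"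
    and z :: "nat \<Rightarrow> (bool list \<Rightarrow> bool) \<Rightarrow> bool list"
    and q p m :: "nat \<Rightarrow> nat"
  assumes q_poly: "poly_bounded q"
    and p_poly: "poly_bounded p"
    and queries_bound: "\<And>n a x r. depth (A n a x r) \<le> q n"
    and advice_len: "\<And>n G. G \<in> funcs n \<Longrightarrow> length (z n G) \<le> p n"
    and success: "\<And>n. avg (funcs n) (\<lambda>G. avg (bits n) (\<lambda>x. avg (bits (m n))
                     (\<lambda>r. if run G (A n (z n G) x r) = G x then 1 else 0))) > 3 / 5"
  shows "\<exists>N. \<forall>n\<ge>N.
           real (card {x \<in> bits n. avg (funcs n) (\<lambda>G. avg (bits (m n))
                  (\<lambda>r. if x \<in> set (queries G (A n (z n G) x r)) then 1 else 0)) \<ge> 1 / 20})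
           \<ge> real (card (bits n)) / 30"
proof -
  obtain N0 where N0: "\<forall>n\<ge>N0. 4000000 * (q n + 1) * (p n + 12) \<le> (2::nat)^n"
    using poly_exp_eventually[OF q_poly p_poly] by blast
  show ?thesis
  proof (intro exI allI impI)
    fix n assume "n \<ge> N0"
    then show "real (card {x \<in> bits n. avg (funcs n) (\<lambda>G. avg (bits (m n))
                  (\<lambda>r. if x \<in> set (queries G (A n (z n G) x r)) then 1 else 0)) \<ge> 1 / 20})
           \<ge> real (card (bits n)) / 30"
      using final_n[of A n q z p m] queries_bound advice_len success N0 by blast
  qed
qed

end
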